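(* Let $A$ be the weighted shift on $\mathcal{H}$ with weights $\{1/n\}_{n\ge1}$. Then for all $t>0$ and $r>0$, \[\frac{\sqrt6}{\pi r}(e^{rt}-1)\le\Bigl\|\Bigl(\frac1t-rA\Bigr)^{-1}\Bigr\|\le te^{rt}.\]
   Context: $\mathcal{H}$ is a separable infinite-dimensional complex Hilbert space with orthonormal basis $\{e_n\}_{n=0}^\infty$, and $A$ is defined by $Ae_n=\frac{1}{n+1}e_{n+1}$ for $n\ge0$ (so its matrix has subdiagonal entries $1,\frac12,\frac13,\dots$). *)

theory Defs
  imports "HOL-Analysis.Analysis"
begin

text \<open>Concrete model of the separable complex Hilbert space: square-summable
complex sequences, with e_n the n-th unit sequence.\<close>

definition ell2 :: "(nat \<Rightarrow> complex) set" where
  "ell2 = {x. summable (\<lambda>n. (cmod (x n))^2)}"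

definition l2norm :: "(nat \<Rightarrow> complex) \<Rightarrow> real" where
  "l2norm x = sqrt (\<Sum>n. (cmod (x n))^2)"

text \<open>Weighted shift: A e_n = e_(n+1) / (n+1), i.e. (A x)_0 = 0, (A x)_m = x_(m-1) / m.\<close>

definition wshift :: "(nat \<Rightarrow> complex) \<Rightarrow> nat \<Rightarrow> complex" where
  "wshift x m = (if m = 0 then 0 else x (m - 1) / of_nat m)"

definition opnorm_l2 :: "((nat \<Rightarrow> complex) \<Rightarrow> nat \<Rightarrow> complex) \<Rightarrow> real" where
  "opnorm_l2 S = Sup {l2norm (S x) | x. x \<in> ell2 \<and> l2norm x \<le> 1}"

end

theory Submission
  imports Defs "HOL-Analysis.Analysis"
begin

primrec Sy :: "real \<Rightarrow> real \<Rightarrow> (nat \<Rightarrow> complex) \<Rightarrow> nat \<Rightarrow> complex" where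
  "Sy t r x 0 = complex_of_real t * x 0"
| "Sy t r x (Suc n) = complex_of_real t * x (Suc n)
      + complex_of_real (r*t) * Sy t r x n / of_nat (Suc n)"

lemma Sy_inv1:
  assumes "t \<noteq> 0"
  shows "(\<lambda>n. Sy t r x n / complex_of_real t - complex_of_real r * wshift (Sy t r x) n) = x"
proof
  fix n show "Sy t r x n / complex_of_real t - complex_of_real r * wshift (Sy t r x) n = x n"
    using assms by (cases n) (auto simp: wshift_def field_simps)
qed

lemma Sy_inv2:
  assumes "t \<noteq> 0"
  shows "Sy t r (\<lambda>n. x n / complex_of_real t - complex_of_real r * wshift x n) = x"
proof
  fix n show "Sy t r (\<lambda>n. x n / complex_of_real t - complex_of_real r * wshift x n) n = x n"
    using assms by (induction n) (auto simp: wshift_def field_simps)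
qed

lemma Sy_bound:
  assumes "t > 0" "r > 0"
  shows "cmod (Sy t r x m) \<le> t * (\<Sum>j\<le>m. (r*t)^(m-j) / fact (m-j) * cmod (x j))"
proof (induction m)
  case 0
  then show ?case using assms by (simp add: norm_mult)
next
  case (Suc m)
  define s where "s = (\<Sum>j\<le>m. (r*t)^(m-j) / fact (m-j) * cmod (x j))"
  have "cmod (Sy t r x (Suc m)) \<le> cmod (complex_of_real t * x (Suc m)) + cmod (complex_of_real (r*t) * Sy t r x m / of_nat (Suc m))"
    by (simp only: Sy.simps norm_triangle_ineq)
  also have "\<dots> = t * cmod (x (Suc m)) + (r*t) / (Suc m) * cmod (Sy t r x m)"
    using assms by (simp add: norm_mult norm_divide del: of_nat_Suc)
  also have "\<dots> \<le> t * cmod (x (Suc m)) + (r*t) / (Suc m) * (t * s)"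
    using Suc assms unfolding s_def by (intro add_left_mono mult_left_mono) auto
  also have "(r*t) / (Suc m) * (t * s)
      = t * (\<Sum>j\<le>m. (r*t) / (Suc m) * ((r*t)^(m-j) / fact (m-j)) * cmod (x j))"
    unfolding s_def by (simp add: sum_distrib_left mult_ac del: of_nat_Suc)
  also have "(\<Sum>j\<le>m. (r*t) / (Suc m) * ((r*t)^(m-j) / fact (m-j)) * cmod (x j))
      \<le> (\<Sum>j\<le>m. (r*t)^(Suc m-j) / fact (Suc m-j) * cmod (x j))"
  proof (intro sum_mono mult_right_mono)
    fix j assume j: "j \<in> {..m}"
    hence e: "Suc m - j = Suc (m - j)" by auto
    have "(r*t) / (Suc m) \<le> (r*t) / (Suc (m-j))"
      using assms by (intro divide_left_mono) auto
    hence "(r*t) / (Suc m) * ((r*t)^(m-j) / fact (m-j)) \<le> (r*t) / (Suc (m-j)) * ((r*t)^(m-j) / fact (m-j))"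
      using assms by (intro mult_right_mono) auto
    also have "\<dots> = (r*t)^(Suc m-j) / fact (Suc m-j)"
      unfolding e by (simp add: field_simps del: of_nat_Suc)
    finally show "(r*t) / (Suc m) * ((r*t)^(m-j) / fact (m-j)) \<le> (r*t)^(Suc m-j) / fact (Suc m-j)" .
  qed auto
  finally have "cmod (Sy t r x (Suc m)) \<le> t * cmod (x (Suc m)) + t * (\<Sum>j\<le>m. (r*t)^(Suc m-j) / fact (Suc m-j) * cmod (x j))"
    using assms by (simp add: mult_left_mono)
  then show ?case by (simp add: algebra_simps)
qed


lemma weighted_CS:
  fixes c a :: "nat \<Rightarrow> real"
  assumes "\<And>i. c i \<ge> 0"
  shows "(\<Sum>i\<in>I. c i * a i)\<^sup>2 \<le> (\<Sum>i\<in>I. c i) * (\<Sum>i\<in>I. c i * (a i)\<^sup>2)"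
proof -
  have "(\<Sum>i\<in>I. sqrt (c i) * (sqrt (c i) * a i))\<^sup>2 \<le> (\<Sum>i\<in>I. (sqrt (c i))\<^sup>2) * (\<Sum>i\<in>I. (sqrt (c i) * a i)\<^sup>2)"
    by (rule Cauchy_Schwarz_ineq_sum)
  also have "(\<lambda>i. sqrt (c i) * (sqrt (c i) * a i)) = (\<lambda>i. c i * a i)"
    using assms by (auto simp: mult.assoc[symmetric])
  also have "(\<lambda>i. (sqrt (c i))\<^sup>2) = c" using assms by auto
  also have "(\<lambda>i. (sqrt (c i) * a i)\<^sup>2) = (\<lambda>i. c i * (a i)\<^sup>2)" using assms by (auto simp: power_mult_distrib)
  finally show ?thesis .
qed

lemma sum_rev_atMost: "(\<Sum>j\<le>m. f (m - j)) = (\<Sum>k\<le>(m::nat). (f k :: real))"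
  using sum.atLeastAtMost_rev[of "\<lambda>j. f (m - j)" 0 m] by (simp add: atLeast0AtMost)

lemma Sy_ell2:
  assumes t: "t > 0" and r: "r > 0" and x: "x \<in> ell2"
  shows "Sy t r x \<in> ell2 \<and> l2norm (Sy t r x) \<le> t * exp (r*t) * l2norm x"
proof -
  define a where "a j = cmod (x j)" for j
  define c where "c k = (r*t)^k / fact k" for k
  define E where "E = exp (r*t)"
  define L where "L = (\<Sum>j. (a j)\<^sup>2)"
  define w where "w m = (\<Sum>j\<le>m. c (m-j) * a j)" for m
  have c0: "c k \<ge> 0" for k using r t by (simp add: c_def)
  have a0: "a j \<ge> 0" for j by (simp add: a_def)
  have csum: "c sums E"
    using exp_converges[of "r*t"] unfolding c_def E_def by (simp add: divide_inverse_commute)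
  have asum: "summable (\<lambda>j. (a j)\<^sup>2)" using x by (simp add: ell2_def a_def)
  have cle: "sum c I \<le> E" if "finite I" for I
    using sum_le_suminf[OF sums_summable[OF csum] that] c0 sums_unique[OF csum] by auto
  have w2: "(w m)\<^sup>2 \<le> E * (\<Sum>j\<le>m. (a j)\<^sup>2 * c (m-j))" for m
  proof -
    have "(w m)\<^sup>2 \<le> (\<Sum>j\<le>m. c (m-j)) * (\<Sum>j\<le>m. c (m-j) * (a j)\<^sup>2)"
      unfolding w_def by (rule weighted_CS) (rule c0)
    moreover have "(\<Sum>j\<le>m. c (m-j)) = (\<Sum>k\<le>m. c k)" by (rule sum_rev_atMost)
    moreover have "(\<Sum>k\<le>m. c k) \<le> E" by (rule cle) simp
    moreover have "(\<Sum>j\<le>m. c (m-j) * (a j)\<^sup>2) \<ge> 0" using c0 by (intro sum_nonneg) auto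
    ultimately have "(w m)\<^sup>2 \<le> E * (\<Sum>j\<le>m. c (m-j) * (a j)\<^sup>2)"
      by (metis (no_types, lifting) mult_right_mono order_trans mult.commute)
    then show ?thesis by (simp add: mult.commute)
  qed
  have cp: "(\<lambda>m. \<Sum>i\<le>m. (a i)\<^sup>2 * c (m-i)) sums (L * E)"
  proof -
    have "(\<lambda>m. \<Sum>i\<le>m. (a i)\<^sup>2 * c (m-i)) sums ((\<Sum>j. (a j)\<^sup>2) * (\<Sum>k. c k))"
      by (rule Cauchy_product_sums) (use asum sums_summable[OF csum] c0 in auto)
    then show ?thesis using sums_unique[OF csum] unfolding L_def by simp
  qed
  have cp0: "(\<Sum>i\<le>m. (a i)\<^sup>2 * c (m-i)) \<ge> 0" for m using c0 by (intro sum_nonneg) auto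
  have wpart: "(\<Sum>m\<in>I. (w m)\<^sup>2) \<le> E * (L * E)" if "finite I" for I
  proof -
    have "(\<Sum>m\<in>I. (w m)\<^sup>2) \<le> (\<Sum>m\<in>I. E * (\<Sum>j\<le>m. (a j)\<^sup>2 * c (m-j)))"
      by (intro sum_mono w2)
    also have "\<dots> = E * (\<Sum>m\<in>I. (\<Sum>j\<le>m. (a j)\<^sup>2 * c (m-j)))" by (simp add: sum_distrib_left)
    also have "(\<Sum>m\<in>I. (\<Sum>j\<le>m. (a j)\<^sup>2 * c (m-j))) \<le> L * E"
      using sum_le_suminf[OF sums_summable[OF cp] that] cp0 sums_unique[OF cp] by auto
    finally show ?thesis unfolding E_def by (simp add: mult_left_mono)
  qed
  have wsum: "summable (\<lambda>m. (w m)\<^sup>2)"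
    by (rule bounded_imp_summable[of _ "E * (L * E)"]) (auto intro: wpart)
  have wle: "(\<Sum>m. (w m)\<^sup>2) \<le> E * (L * E)"
    by (rule suminf_le_const[OF wsum]) (rule wpart, simp)
  have yle: "(cmod (Sy t r x m))\<^sup>2 \<le> t\<^sup>2 * (w m)\<^sup>2" for m
  proof -
    have "cmod (Sy t r x m) \<le> t * w m" using Sy_bound[OF t r, of x m] unfolding w_def c_def a_def by simp
    then have "(cmod (Sy t r x m))\<^sup>2 \<le> (t * w m)\<^sup>2" by (intro power_mono) auto
    then show ?thesis by (simp add: power_mult_distrib)
  qed
  have ysum: "summable (\<lambda>m. (cmod (Sy t r x m))\<^sup>2)"
    by (rule summable_comparison_test'[of "\<lambda>m. t\<^sup>2 * (w m)\<^sup>2" 0]) (use wsum yle in auto)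
  have "(\<Sum>m. (cmod (Sy t r x m))\<^sup>2) \<le> (\<Sum>m. t\<^sup>2 * (w m)\<^sup>2)"
    by (rule suminf_le) (use yle ysum wsum in auto)
  also have "\<dots> = t\<^sup>2 * (\<Sum>m. (w m)\<^sup>2)" using suminf_mult[OF wsum] by simp
  also have "\<dots> \<le> t\<^sup>2 * (E * (L * E))" using wle by (simp add: mult_left_mono)
  finally have "(\<Sum>m. (cmod (Sy t r x m))\<^sup>2) \<le> (t * E)\<^sup>2 * L" by (simp add: power2_eq_square mult_ac)
  then have "l2norm (Sy t r x) \<le> sqrt ((t * E)\<^sup>2 * L)" unfolding l2norm_def by (rule real_sqrt_le_mono)
  also have "\<dots> = t * E * l2norm x" using t unfolding l2norm_def L_def a_def E_def
    by (simp add: real_sqrt_mult)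
  finally show ?thesis using ysum unfolding ell2_def E_def by simp
qed


definition e0 :: "nat \<Rightarrow> complex" where "e0 n = (if n = 0 then 1 else 0)"

lemma e0_sq: "(\<lambda>n. (cmod (e0 n))\<^sup>2) = (\<lambda>n. if n = 0 then 1 else 0)"
  by (auto simp: e0_def)

lemma e0_ell2: "e0 \<in> ell2"
  unfolding ell2_def mem_Collect_eq e0_sq using sums_summable[OF sums_single[of 0 "\<lambda>_. 1::real"]] by simp

lemma e0_norm: "l2norm e0 = 1"
  unfolding l2norm_def e0_sq using sums_unique[OF sums_single[of 0 "\<lambda>_. 1::real"]] by auto

lemma Sy_e0: "Sy t r e0 m = complex_of_real (t * (r*t)^m / fact m)"
proof (induction m)
  case 0
  then show ?case by (simp add: e0_def)
next
  case (Suc m)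
  have "Sy t r e0 (Suc m) = complex_of_real (r*t) * complex_of_real (t * (r*t)^m / fact m) / of_nat (Suc m)"
    by (simp only: Sy.simps Suc) (simp add: e0_def)
  also have "\<dots> = complex_of_real ((r*t) * (t * (r*t)^m / fact m) / real (Suc m))"
    by simp
  also have "(r*t) * (t * (r*t)^m / fact m) / real (Suc m) = t * (r*t)^(Suc m) / fact (Suc m)"
    by (simp add: fact_Suc field_simps del: of_nat_Suc)
  finally show ?case .
qed

lemma lower:
  assumes t: "t > 0" and r: "r > 0"
  shows "sqrt 6 / (pi * r) * (exp (r * t) - 1) \<le> l2norm (Sy t r e0)"
proof -
  define v where "v m = t * (r*t)^m / fact m" for m
  define b where "b m = 1 / (1 + real m)" for m
  define E where "E = exp (r*t)"
  define V where "V = (\<Sum>m. (v m)\<^sup>2)"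
  have cm: "(cmod (Sy t r e0 m)) = v m" for m
    unfolding Sy_e0 norm_of_real v_def using t r by simp
  have vsum: "summable (\<lambda>m. (v m)\<^sup>2)"
    using Sy_ell2[OF t r e0_ell2] by (simp add: ell2_def cm)
  have ln: "l2norm (Sy t r e0) = sqrt V" unfolding l2norm_def cm V_def ..
  have bsum: "(\<lambda>m. (b m)\<^sup>2) sums (pi\<^sup>2 / 6)"
    using inverse_squares_sums unfolding b_def by (simp add: power_divide)
  have hs: "(\<lambda>m. v m * b m) sums ((E - 1) / r)"
  proof -
    have "(\<lambda>n. (r*t)^n / fact n) sums E"
      using exp_converges[of "r*t"] unfolding E_def by (simp add: divide_inverse_commute)
    then have "(\<lambda>n. (r*t)^(Suc n) / fact (Suc n)) sums (E - 1)"
      by (subst sums_Suc_iff) simp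
    then have "(\<lambda>n. (r*t)^(Suc n) / fact (Suc n) / r) sums ((E - 1) / r)"
      by (rule sums_divide)
    also have "(\<lambda>n. (r*t)^(Suc n) / fact (Suc n) / r) = (\<lambda>m. v m * b m)"
      proof (intro ext)
      fix n
      have f0: "fact n \<noteq> (0::real)" by simp
      have n0: "1 + real n \<noteq> 0" by simp
      have "(r*t)^(Suc n) / fact (Suc n) / r = (r * (t * (r*t)^n)) / (r * (fact n * (1 + real n)))"
        by (simp add: fact_Suc algebra_simps)
      also have "\<dots> = (t * (r*t)^n) / (fact n * (1 + real n))" using r by simp
      also have "\<dots> = v n * b n" unfolding v_def b_def by simp
      finally show "(r*t)^(Suc n) / fact (Suc n) / r = v n * b n" .
    qed
    finally show ?thesis .
  qed
  have part: "(\<Sum>m<N. v m * b m)\<^sup>2 \<le> V * (pi\<^sup>2 / 6)" for N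
  proof -
    have "(\<Sum>m<N. v m * b m)\<^sup>2 \<le> (\<Sum>m<N. (v m)\<^sup>2) * (\<Sum>m<N. (b m)\<^sup>2)"
      by (rule Cauchy_Schwarz_ineq_sum)
    also have "\<dots> \<le> V * (pi\<^sup>2 / 6)"
    proof (rule mult_mono)
      show "(\<Sum>m<N. (v m)\<^sup>2) \<le> V" unfolding V_def by (rule sum_le_suminf[OF vsum]) auto
      show "(\<Sum>m<N. (b m)\<^sup>2) \<le> pi\<^sup>2 / 6"
        using sum_le_suminf[OF sums_summable[OF bsum], of "{..<N}"] sums_unique[OF bsum] by auto
      show "0 \<le> V" unfolding V_def by (rule suminf_nonneg[OF vsum]) auto
      show "0 \<le> (\<Sum>m<N. (b m)\<^sup>2)" by (intro sum_nonneg) auto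
    qed
    finally show ?thesis .
  qed
  have lim: "(\<lambda>N. (\<Sum>m<N. v m * b m)\<^sup>2) \<longlonglongrightarrow> ((E - 1) / r)\<^sup>2"
    by (intro tendsto_power) (use hs in \<open>simp add: sums_def\<close>)
  have key: "((E - 1) / r)\<^sup>2 \<le> V * (pi\<^sup>2 / 6)"
    by (rule LIMSEQ_le_const2[OF lim]) (use part in auto)
  have E1: "E - 1 \<ge> 0" unfolding E_def using r t by simp
  have "(sqrt 6 / (pi * r) * (E - 1))\<^sup>2 = 6 / pi\<^sup>2 * ((E - 1) / r)\<^sup>2"
    by (simp add: power_mult_distrib power_divide)
  also have "\<dots> \<le> 6 / pi\<^sup>2 * (V * (pi\<^sup>2 / 6))" using key by (intro mult_left_mono) auto
  also have "\<dots> = V" by simp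
  finally have "sqrt 6 / (pi * r) * (E - 1) \<le> sqrt V" by (rule real_le_rsqrt)
  then show ?thesis unfolding ln E_def .
qed

theorem lemma3p2:
  fixes t r :: real
  assumes "t > 0" and "r > 0"
  shows "\<exists>S. (\<forall>x\<in>ell2. S x \<in> ell2
                 \<and> S (\<lambda>n. x n / complex_of_real t - complex_of_real r * wshift x n) = x
                 \<and> (\<lambda>n. S x n / complex_of_real t - complex_of_real r * wshift (S x) n) = x)
          \<and> (\<exists>C. \<forall>x\<in>ell2. l2norm (S x) \<le> C * l2norm x)
          \<and> sqrt 6 / (pi * r) * (exp (r * t) - 1) \<le> opnorm_l2 S
          \<and> opnorm_l2 S \<le> t * exp (r * t)"
proof (intro exI[of _ "Sy t r"] conjI)
  have t0: "t \<noteq> 0" using assms by simp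
  show "\<forall>x\<in>ell2. Sy t r x \<in> ell2
                 \<and> Sy t r (\<lambda>n. x n / complex_of_real t - complex_of_real r * wshift x n) = x
                 \<and> (\<lambda>n. Sy t r x n / complex_of_real t - complex_of_real r * wshift (Sy t r x) n) = x"
    using Sy_ell2[OF assms] Sy_inv1[OF t0] Sy_inv2[OF t0] by blast
  show "\<exists>C. \<forall>x\<in>ell2. l2norm (Sy t r x) \<le> C * l2norm x"
    using Sy_ell2[OF assms] by blast
  define X where "X = {l2norm (Sy t r x) | x. x \<in> ell2 \<and> l2norm x \<le> 1}"
  have op: "opnorm_l2 (Sy t r) = Sup X" unfolding opnorm_l2_def X_def ..
  have tE: "t * exp (r*t) \<ge> 0" using assms by simp
  have ub: "y \<le> t * exp (r*t)" if yX: "y \<in> X" for y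
  proof -
    obtain x where x: "x \<in> ell2" "l2norm x \<le> 1" "y = l2norm (Sy t r x)" using yX unfolding X_def by blast
    have "y \<le> t * exp (r*t) * l2norm x" using Sy_ell2[OF assms x(1)] x(3) by simp
    also have "\<dots> \<le> t * exp (r*t) * 1" using x(2) tE by (intro mult_left_mono) auto
    finally show ?thesis by simp
  qed
  have mem: "l2norm (Sy t r e0) \<in> X" unfolding X_def using e0_ell2 e0_norm by auto
  have bdd: "bdd_above X" using ub by (auto simp: bdd_above_def)
  show "sqrt 6 / (pi * r) * (exp (r * t) - 1) \<le> opnorm_l2 (Sy t r)"
    unfolding op using lower[OF assms] cSup_upper[OF mem bdd] by linarith
  show "opnorm_l2 (Sy t r) \<le> t * exp (r * t)"
    unfolding op using mem by (intro cSup_least ub) auto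
qed

end
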